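(* Let $\Gamma$ be a graph and let $s\neq t$ be vertices of $\Gamma$. Then the subgroups $S_5(s)$ and $S_5(t)$ are not conjugate in $G(C_\Gamma)$.
   Context: Let $\Gamma$ be a graph with vertex set $S$ and symmetric adjacency relation (loops, if present, are ignored; "adjacent" refers to distinct vertices). $G(C_\Gamma)$ is the group with generators $s_1,s_2,s_3,s_4$ for each $s\in S$ and exactly the following relations: every generator is an involution; for each $s\in S$, $(s_is_{i+1})^3=e$ for $i=1,2,3$ and $(s_is_j)^2=e$ for $|i-j|\ge2$; for all distinct $s,t\in S$, $(s_4t_4)^2=e$; for all distinct adjacent $s,t\in S$, $(s_1t_1)^2=(s_1t_3)^2=(s_3t_1)^2=(s_3t_3)^2=e$. For $s\in S$, $S_5(s)=\langle s_1,s_2,s_3,s_4\rangle\le G(C_\Gamma)$ (isomorphic to $S_5$). *)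

theory Defs
  imports "HOL-Algebra.Generated_Groups"
begin

text \<open>Generators s_i of G(C_Gamma) are encoded as pairs (s, i) with s in S and i in {1..4}.
  Since every generator is an involution, group elements are represented by positive words
  (lists of generators) modulo the relators; the involution relation is itself a relator.\<close>

definition gens :: "'a set \<Rightarrow> ('a \<times> nat) set" where
  "gens S = S \<times> {1..4}"

definition relators :: "'a set \<Rightarrow> ('a \<Rightarrow> 'a \<Rightarrow> bool) \<Rightarrow> ('a \<times> nat) list set" where
  "relators S E =
     {[x, x] | x. x \<in> gens S}
   \<union> {concat (replicate 3 [(s, i), (s, Suc i)]) | s i. s \<in> S \<and> i \<in> {1..3}}
   \<union> {concat (replicate 2 [(s, i), (s, j)]) | s i j.
        s \<in> S \<and> i \<in> {1..4} \<and> j \<in> {1..4} \<and> (i + 2 \<le> j \<or> j + 2 \<le> i)}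
   \<union> {concat (replicate 2 [(s, 4), (t, 4)]) | s t. s \<in> S \<and> t \<in> S \<and> s \<noteq> t}
   \<union> {concat (replicate 2 [(s, i), (t, j)]) | s t i j.
        s \<in> S \<and> t \<in> S \<and> s \<noteq> t \<and> E s t \<and> i \<in> {1, 3} \<and> j \<in> {1, 3}}"

inductive pres_eq :: "'g list set \<Rightarrow> 'g list \<Rightarrow> 'g list \<Rightarrow> bool" for R where
  refl: "pres_eq R w w"
| sym: "pres_eq R u v \<Longrightarrow> pres_eq R v u"
| trans: "pres_eq R u v \<Longrightarrow> pres_eq R v w \<Longrightarrow> pres_eq R u w"
| del: "r \<in> R \<Longrightarrow> pres_eq R (u @ r @ v) (u @ v)"

definition pres_class :: "'a set \<Rightarrow> ('a \<Rightarrow> 'a \<Rightarrow> bool) \<Rightarrow> ('a \<times> nat) list \<Rightarrow> ('a \<times> nat) list set" where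
  "pres_class S E w = {v \<in> lists (gens S). pres_eq (relators S E) v w}"

definition GC :: "'a set \<Rightarrow> ('a \<Rightarrow> 'a \<Rightarrow> bool) \<Rightarrow> ('a \<times> nat) list set monoid" where
  "GC S E = \<lparr> carrier = {pres_class S E w | w. w \<in> lists (gens S)},
              mult = (\<lambda>A B. pres_class S E ((SOME a. a \<in> A) @ (SOME b. b \<in> B))),
              one = pres_class S E [] \<rparr>"

definition S5 :: "'a set \<Rightarrow> ('a \<Rightarrow> 'a \<Rightarrow> bool) \<Rightarrow> 'a \<Rightarrow> ('a \<times> nat) list set set" where
  "S5 S E s = generate (GC S E) {pres_class S E [(s, i)] | i. i \<in> {1..4}}"

end

theory Submission
  imports Defs
begin

lemma pres_eq_ctx:
  "pres_eq R u v \<Longrightarrow> pres_eq R (x @ u @ y) (x @ v @ y)"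
proof (induction rule: pres_eq.induct)
  case (refl w) then show ?case by (rule pres_eq.refl)
next
  case (sym u v) then show ?case by (blast intro: pres_eq.sym)
next
  case (trans u v w) then show ?case by (metis pres_eq.trans)
next
  case (del r u v)
  have "pres_eq R ((x @ u) @ r @ (v @ y)) ((x @ u) @ (v @ y))" by (rule pres_eq.del[OF del])
  then show ?case by simp
qed

lemma pres_eq_app:
  assumes "pres_eq R u u'" "pres_eq R v v'"
  shows "pres_eq R (u @ v) (u' @ v')"
proof -
  have "pres_eq R ([] @ u @ v) ([] @ u' @ v)" by (rule pres_eq_ctx[OF assms(1)])
  moreover have "pres_eq R (u' @ v @ []) (u' @ v' @ [])" by (rule pres_eq_ctx[OF assms(2)])
  ultimately show ?thesis by (metis append_Nil append_Nil2 pres_eq.trans)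
qed

lemma cls_mem: "w \<in> lists (gens S) \<Longrightarrow> w \<in> pres_class S E w"
  by (simp add: pres_class_def pres_eq.refl)

lemma cls_eq_iff:
  assumes "u \<in> lists (gens S)" "v \<in> lists (gens S)"
  shows "pres_class S E u = pres_class S E v \<longleftrightarrow> pres_eq (relators S E) u v"
proof
  assume "pres_class S E u = pres_class S E v"
  then have "u \<in> pres_class S E v" using cls_mem[OF assms(1), of E] by simp
  then show "pres_eq (relators S E) u v" by (simp add: pres_class_def)
next
  assume h: "pres_eq (relators S E) u v"
  show "pres_class S E u = pres_class S E v"
    unfolding pres_class_def using h by (auto intro: pres_eq.trans pres_eq.sym)
qed

lemma some_cls:
  assumes "w \<in> lists (gens S)"
  shows "(SOME a. a \<in> pres_class S E w) \<in> lists (gens S) \<and>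
         pres_eq (relators S E) (SOME a. a \<in> pres_class S E w) w"
proof -
  have "(SOME a. a \<in> pres_class S E w) \<in> pres_class S E w"
    using cls_mem[OF assms] by (rule someI)
  then show ?thesis by (simp add: pres_class_def)
qed

lemma cls_mult:
  assumes "u \<in> lists (gens S)" "v \<in> lists (gens S)"
  shows "pres_class S E u \<otimes>\<^bsub>GC S E\<^esub> pres_class S E v = pres_class S E (u @ v)"
proof -
  let ?a = "SOME a. a \<in> pres_class S E u"
  let ?b = "SOME b. b \<in> pres_class S E v"
  have a: "?a \<in> lists (gens S)" "pres_eq (relators S E) ?a u" using some_cls[OF assms(1)] by auto
  have b: "?b \<in> lists (gens S)" "pres_eq (relators S E) ?b v" using some_cls[OF assms(2)] by auto
  have "pres_eq (relators S E) (?a @ ?b) (u @ v)" by (rule pres_eq_app[OF a(2) b(2)])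
  then have "pres_class S E (?a @ ?b) = pres_class S E (u @ v)"
    using cls_eq_iff[of "?a @ ?b" S "u @ v" E] a b assms by simp
  then show ?thesis by (simp add: GC_def)
qed

lemma rev_cancel:
  "w \<in> lists (gens S) \<Longrightarrow> pres_eq (relators S E) (rev w @ w) []"
proof (induction w)
  case Nil then show ?case by (simp add: pres_eq.refl)
next
  case (Cons x w)
  have x: "x \<in> gens S" "w \<in> lists (gens S)" using Cons.prems by auto
  have r: "[x, x] \<in> relators S E" using x(1) unfolding relators_def by blast
  have "rev (x # w) @ (x # w) = rev w @ [x, x] @ w" by simp
  moreover have "pres_eq (relators S E) (rev w @ [x, x] @ w) (rev w @ w)"
    by (rule pres_eq.del[OF r])
  ultimately show ?case using Cons.IH[OF x(2)] by (metis pres_eq.trans)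
qed

lemma GC_carrier: "g \<in> carrier (GC S E) \<longleftrightarrow> (\<exists>w \<in> lists (gens S). g = pres_class S E w)"
  by (auto simp: GC_def)

lemma GC_one: "\<one>\<^bsub>GC S E\<^esub> = pres_class S E []"
  by (simp add: GC_def)

lemma GC_group: "group (GC S E)"
proof (rule groupI)
  fix x y assume "x \<in> carrier (GC S E)" "y \<in> carrier (GC S E)"
  then obtain u v where "u \<in> lists (gens S)" "v \<in> lists (gens S)"
    "x = pres_class S E u" "y = pres_class S E v" by (auto simp: GC_carrier)
  then show "x \<otimes>\<^bsub>GC S E\<^esub> y \<in> carrier (GC S E)"
    by (simp add: cls_mult GC_carrier) (metis append_in_lists_conv)
next
  show "\<one>\<^bsub>GC S E\<^esub> \<in> carrier (GC S E)" by (auto simp: GC_carrier GC_one)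
next
  fix x y z assume "x \<in> carrier (GC S E)" "y \<in> carrier (GC S E)" "z \<in> carrier (GC S E)"
  then obtain u v w where "u \<in> lists (gens S)" "v \<in> lists (gens S)" "w \<in> lists (gens S)"
    "x = pres_class S E u" "y = pres_class S E v" "z = pres_class S E w" by (auto simp: GC_carrier)
  then show "x \<otimes>\<^bsub>GC S E\<^esub> y \<otimes>\<^bsub>GC S E\<^esub> z = x \<otimes>\<^bsub>GC S E\<^esub> (y \<otimes>\<^bsub>GC S E\<^esub> z)"
    by (simp add: cls_mult)
next
  fix x assume "x \<in> carrier (GC S E)"
  then obtain u where "u \<in> lists (gens S)" "x = pres_class S E u" by (auto simp: GC_carrier)
  then show "\<one>\<^bsub>GC S E\<^esub> \<otimes>\<^bsub>GC S E\<^esub> x = x"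
    using cls_mult[of "[]" S u E] by (simp add: GC_one)
next
  fix x assume "x \<in> carrier (GC S E)"
  then obtain u where u: "u \<in> lists (gens S)" "x = pres_class S E u" by (auto simp: GC_carrier)
  have ru: "rev u \<in> lists (gens S)" using u(1) by auto
  have "pres_class S E (rev u) \<otimes>\<^bsub>GC S E\<^esub> x = \<one>\<^bsub>GC S E\<^esub>"
    using cls_mult[OF ru u(1)] u cls_eq_iff[of "rev u @ u" S "[]" E] rev_cancel[OF u(1), of E] ru
    by (simp add: GC_one)
  moreover have "pres_class S E (rev u) \<in> carrier (GC S E)" using ru by (auto simp: GC_carrier)
  ultimately show "\<exists>y\<in>carrier (GC S E). y \<otimes>\<^bsub>GC S E\<^esub> x = \<one>\<^bsub>GC S E\<^esub>"
    by blast
qed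

lemma GC_inv:
  assumes "u \<in> lists (gens S)"
  shows "inv\<^bsub>GC S E\<^esub> (pres_class S E u) = pres_class S E (rev u)"
proof -
  interpret group "GC S E" by (rule GC_group)
  have ru: "rev u \<in> lists (gens S)" using assms by auto
  have "pres_class S E (rev u) \<otimes>\<^bsub>GC S E\<^esub> pres_class S E u = \<one>\<^bsub>GC S E\<^esub>"
    using cls_mult[OF ru assms] cls_eq_iff[of "rev u @ u" S "[]" E] rev_cancel[OF assms, of E] ru assms
    by (simp add: GC_one)
  then show ?thesis by (rule inv_equality) (use assms ru in \<open>auto simp: GC_carrier\<close>)
qed

definition cnt :: "'a \<Rightarrow> ('a \<times> nat) list \<Rightarrow> nat" where
  "cnt s w = length (filter (\<lambda>x. fst x = s) w)"

lemma cnt_app[simp]: "cnt s (u @ v) = cnt s u + cnt s v"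
  by (simp add: cnt_def)

lemma cnt_Cons_same[simp]: "cnt s ((s, i) # w) = Suc (cnt s w)"
  by (simp add: cnt_def)

lemma cnt_Nil[simp]: "cnt s [] = 0"
  by (simp add: cnt_def)

lemma cnt_concat_rep: "cnt s (concat (replicate n xs)) = n * cnt s xs"
  by (induction n) auto

lemma cnt_rel: "r \<in> relators S E \<Longrightarrow> even (cnt s r)"
  unfolding relators_def
  apply (elim UnE)
      apply (auto simp: cnt_concat_rep)
  apply (auto simp: cnt_def)
  done

lemma cnt_pres: "pres_eq (relators S E) u v \<Longrightarrow> even (cnt s u) = even (cnt s v)"
proof (induction rule: pres_eq.induct)
  case (del r u v)
  then show ?case using cnt_rel[OF del, of s] by simp
qed auto

lemma gen_even:
  assumes "h \<in> S5 S E t" "t \<noteq> s" "t \<in> S"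
  shows "\<exists>w \<in> lists (gens S). h = pres_class S E w \<and> even (cnt s w)"
  using assms(1) unfolding S5_def
proof (induction rule: generate.induct)
  case one
  show ?case by (intro bexI[of _ "[]"]) (simp_all add: GC_one)
next
  case (incl h)
  then obtain i where i: "i \<in> {1..4}" "h = pres_class S E [(t, i)]" by auto
  have "[(t, i)] \<in> lists (gens S)" using i assms(3) by (simp add: gens_def)
  then show ?case using i assms(2) by (intro bexI[of _ "[(t, i)]"]) (simp_all add: cnt_def)
next
  case (inv h)
  then obtain i where i: "i \<in> {1..4}" "h = pres_class S E [(t, i)]" by auto
  have "[(t, i)] \<in> lists (gens S)" using i assms(3) by (simp add: gens_def)
  then show ?case using i assms(2) GC_inv[of "[(t,i)]" S E]
    by (intro bexI[of _ "[(t, i)]"]) (simp_all add: cnt_def)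
next
  case (eng h1 h2)
  then obtain u v where "u \<in> lists (gens S)" "v \<in> lists (gens S)" "h1 = pres_class S E u"
    "h2 = pres_class S E v" "even (cnt s u)" "even (cnt s v)" by auto
  then show ?case using cls_mult[of u S v E] by (intro bexI[of _ "u @ v"]) simp_all
qed

theorem lemma4p16:
  fixes S :: "'a set" and E :: "'a \<Rightarrow> 'a \<Rightarrow> bool" and s t :: 'a
  assumes "\<forall>x y. E x y \<longrightarrow> E y x"
    and "s \<in> S" and "t \<in> S" and "s \<noteq> t"
  shows "\<not> (\<exists>g \<in> carrier (GC S E).
            (\<lambda>h. g \<otimes>\<^bsub>GC S E\<^esub> h \<otimes>\<^bsub>GC S E\<^esub> inv\<^bsub>GC S E\<^esub> g) ` S5 S E s = S5 S E t)"
proof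
  assume "\<exists>g \<in> carrier (GC S E).
            (\<lambda>h. g \<otimes>\<^bsub>GC S E\<^esub> h \<otimes>\<^bsub>GC S E\<^esub> inv\<^bsub>GC S E\<^esub> g) ` S5 S E s = S5 S E t"
  then obtain g where g: "g \<in> carrier (GC S E)"
    and eq: "(\<lambda>h. g \<otimes>\<^bsub>GC S E\<^esub> h \<otimes>\<^bsub>GC S E\<^esub> inv\<^bsub>GC S E\<^esub> g) ` S5 S E s = S5 S E t"
    by blast
  obtain wg where wg: "wg \<in> lists (gens S)" "g = pres_class S E wg" using g by (auto simp: GC_carrier)
  have s1: "[(s, 1)] \<in> lists (gens S)" using assms(2) by (simp add: gens_def)
  have "pres_class S E [(s, 1)] \<in> S5 S E s"
    unfolding S5_def by (rule generate.incl) auto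
  then have "(\<lambda>h. g \<otimes>\<^bsub>GC S E\<^esub> h \<otimes>\<^bsub>GC S E\<^esub> inv\<^bsub>GC S E\<^esub> g) (pres_class S E [(s, 1)])
     \<in> (\<lambda>h. g \<otimes>\<^bsub>GC S E\<^esub> h \<otimes>\<^bsub>GC S E\<^esub> inv\<^bsub>GC S E\<^esub> g) ` S5 S E s"
    by (rule imageI)
  then have A: "g \<otimes>\<^bsub>GC S E\<^esub> pres_class S E [(s, 1)] \<otimes>\<^bsub>GC S E\<^esub> inv\<^bsub>GC S E\<^esub> g \<in> S5 S E t"
    unfolding eq .
  have rw: "rev wg \<in> lists (gens S)" using wg(1) by auto
  have ws: "wg @ [(s, 1)] \<in> lists (gens S)" using wg(1) s1 by simp
  have "g \<otimes>\<^bsub>GC S E\<^esub> pres_class S E [(s, 1)] \<otimes>\<^bsub>GC S E\<^esub> inv\<^bsub>GC S E\<^esub> g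
      = pres_class S E (wg @ [(s, 1)]) \<otimes>\<^bsub>GC S E\<^esub> pres_class S E (rev wg)"
    unfolding wg(2) GC_inv[OF wg(1), of E] cls_mult[OF wg(1) s1, of E] ..
  also have "\<dots> = pres_class S E ((wg @ [(s, 1)]) @ rev wg)"
    by (rule cls_mult[OF ws rw])
  finally have B: "g \<otimes>\<^bsub>GC S E\<^esub> pres_class S E [(s, 1)] \<otimes>\<^bsub>GC S E\<^esub> inv\<^bsub>GC S E\<^esub> g
      = pres_class S E ((wg @ [(s, 1)]) @ rev wg)" .
  obtain w where w: "w \<in> lists (gens S)" "even (cnt s w)"
    "g \<otimes>\<^bsub>GC S E\<^esub> pres_class S E [(s, 1)] \<otimes>\<^bsub>GC S E\<^esub> inv\<^bsub>GC S E\<^esub> g = pres_class S E w"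
    using gen_even[OF A assms(4)[symmetric] assms(3)] by (elim bexE conjE) (rule that)
  have ww: "(wg @ [(s, 1)]) @ rev wg \<in> lists (gens S)" using ws rw by simp
  have C: "pres_class S E ((wg @ [(s, 1)]) @ rev wg) = pres_class S E w"
    using B w(3) by simp
  have D: "pres_eq (relators S E) ((wg @ [(s, 1)]) @ rev wg) w"
    using cls_eq_iff[OF ww w(1), of E] C by simp
  then have "even (cnt s ((wg @ [(s, 1)]) @ rev wg))" using cnt_pres[OF D, of s] w(2) by simp
  moreover have "cnt s (rev wg) = cnt s wg" by (simp add: cnt_def rev_filter[symmetric])
  moreover have "cnt s [(s, 1)] = 1" by (simp add: cnt_def)
  ultimately show False by simp
qed

end
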